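(* Let $\mathcal{A}$ be a fixed (non-random) countable partition of $\Theta$ into measurable sets, and let $(\theta_1,\mathbf{X}_1),\dots,(\theta_B,\mathbf{X}_B),(\theta,\mathbf{X})$ be i.i.d. pairs with $\theta_b \sim r$ and $\mathbf{X}_b\mid\theta_b$ distributed according to the statistical model at $\theta_b$. For $\theta' \in \Theta$ let $A(\theta')$ be the element of $\mathcal{A}$ containing $\theta'$, $I_{A(\theta')} = \{b : \theta_b \in A(\theta')\}$, $$\widehat H_B(t\mid\theta') = \frac{1}{|I_{A(\theta')}|+1}\Big(\sum_{b\in I_{A(\theta')}} \mathbb{I}\big(\tau(\mathbf{X}_b,\theta_b)\le t\big)+1\Big),$$ $\widehat C_{\theta',B} = \inf\{t : \widehat H_B(t\mid\theta') \ge \alpha\}$, and $\widehat R_B(\mathbf{X}) = \{\theta' \in\Theta : \tau(\mathbf{X},\theta') \ge \widehat C_{\theta',B}\}$. Then $\mathbb{P}(\theta \in \widehat R_B(\mathbf{X})) \ge 1-\alpha$.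
   Context: A statistical model gives, for each parameter $\theta\in\Theta$, a distribution of the data $\mathbf{X}\in\mathcal{X}$; $r$ is a reference probability distribution on $\Theta$; $\alpha\in(0,1)$. A fixed measurable function $\tau:\mathcal{X}\times\Theta\to\mathbb{R}$ (a test statistic) is given, and for every $\theta$ the conditional distribution of $\tau(\mathbf{X},\theta)$ given $\theta$ is continuous (has no atoms). *)

theory Defs
  imports "HOL-Probability.Probability"
begin

definition countable_partition :: "'a measure \<Rightarrow> 'a set set \<Rightarrow> bool" where
  "countable_partition R P \<longleftrightarrow> countable P \<and> P \<subseteq> sets R \<and> {} \<notin> P \<and> disjoint P \<and> \<Union>P = space R"

definition cell :: "'a set set \<Rightarrow> 'a \<Rightarrow> 'a set" where
  "cell P th = (THE A. A \<in> P \<and> th \<in> A)"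

definition joint_law :: "'a measure \<Rightarrow> 'x measure \<Rightarrow> ('a \<Rightarrow> 'x measure) \<Rightarrow> ('a \<times> 'x) measure" where
  "joint_law r X K = r \<bind> (\<lambda>th. distr (K th) (r \<Otimes>\<^sub>M X) (\<lambda>x. (th, x)))"

definition idx_set :: "'a set set \<Rightarrow> nat \<Rightarrow> (nat \<Rightarrow> 'a \<times> 'x) \<Rightarrow> 'a \<Rightarrow> nat set" where
  "idx_set P B D th' = {b \<in> {..<B}. fst (D b) \<in> cell P th'}"

definition H_hat :: "'a set set \<Rightarrow> ('x \<Rightarrow> 'a \<Rightarrow> real) \<Rightarrow> nat \<Rightarrow> (nat \<Rightarrow> 'a \<times> 'x) \<Rightarrow> 'a \<Rightarrow> real \<Rightarrow> real" where
  "H_hat P \<tau> B D th' t =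
     (real (card {b \<in> idx_set P B D th'. \<tau> (snd (D b)) (fst (D b)) \<le> t}) + 1)
       / (real (card (idx_set P B D th')) + 1)"

text \<open>Critical value hat C = inf {t. hat H(t|th') >= alpha}, taken in the extended reals
  (it is -infinity when the set is unbounded below).\<close>
definition C_hat :: "'a set set \<Rightarrow> ('x \<Rightarrow> 'a \<Rightarrow> real) \<Rightarrow> real \<Rightarrow> nat \<Rightarrow> (nat \<Rightarrow> 'a \<times> 'x) \<Rightarrow> 'a \<Rightarrow> ereal" where
  "C_hat P \<tau> \<alpha> B D th' = Inf {ereal t | t. H_hat P \<tau> B D th' t \<ge> \<alpha>}"

definition R_hat :: "'a measure \<Rightarrow> 'a set set \<Rightarrow> ('x \<Rightarrow> 'a \<Rightarrow> real) \<Rightarrow> real \<Rightarrow> nat \<Rightarrow> (nat \<Rightarrow> 'a \<times> 'x) \<Rightarrow> 'x \<Rightarrow> 'a set" where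
  "R_hat r P \<tau> \<alpha> B D x = {th' \<in> space r. ereal (\<tau> x th') \<ge> C_hat P \<tau> \<alpha> B D th'}"

end

theory Submission
  imports Defs
begin

lemma part_uniq:
  assumes part: "countable_partition r P" and "A \<in> P" "A' \<in> P" "th \<in> A" "th \<in> A'"
  shows "A' = A"
proof (rule ccontr)
  assume ne: "A' \<noteq> A"
  have "disjoint P" using part unfolding countable_partition_def by simp
  hence "A' \<inter> A = {}" using disjointD assms(2,3) ne by metis
  thus False using assms(4,5) by auto
qed

lemma cell_props:
  assumes part: "countable_partition r P" and th: "th \<in> space r"
  shows "cell P th \<in> P \<and> th \<in> cell P th"
proof -
  from part th obtain A where A: "A \<in> P" "th \<in> A" unfolding countable_partition_def by auto
  have "cell P th = A" unfolding cell_def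
  proof (rule the_equality)
    show "A \<in> P \<and> th \<in> A" using A by simp
    fix A' assume "A' \<in> P \<and> th \<in> A'"
    thus "A' = A" using part_uniq[OF part A(1) _ A(2)] by simp
  qed
  thus ?thesis using A by simp
qed

lemma cell_eq:
  assumes part: "countable_partition r P" and "A \<in> P" "th \<in> A"
  shows "cell P th = A"
proof -
  have th: "th \<in> space r" using assms unfolding countable_partition_def by auto
  from cell_props[OF part th] have "cell P th \<in> P" "th \<in> cell P th" by auto
  thus ?thesis using part_uniq[OF part assms(2)] assms(3) by simp
qed

lemma cell_mem_iff:
  assumes part: "countable_partition r P" and "th \<in> space r" "th' \<in> space r"
  shows "th' \<in> cell P th \<longleftrightarrow> cell P th' = cell P th"
proof
  assume "th' \<in> cell P th"
  thus "cell P th' = cell P th" using cell_eq[OF part] cell_props[OF part assms(2)] by simp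
next
  assume "cell P th' = cell P th"
  thus "th' \<in> cell P th" using cell_props[OF part assms(3)] by simp
qed

lemma group_count:
  fixes s :: "'i \<Rightarrow> real" assumes fin: "finite G" and a: "0 < \<alpha>"
  shows "real (card {i\<in>G. real (card {j\<in>G. s j \<le> s i}) < \<alpha> * real (card G)}) \<le> \<alpha> * real (card G)"
proof -
  define F where "F = {i\<in>G. real (card {j\<in>G. s j \<le> s i}) < \<alpha> * real (card G)}"
  have finF: "finite F" using fin unfolding F_def by simp
  show ?thesis
  proof (cases "F = {}")
    case True
    have "0 \<le> \<alpha> * real (card G)" using a by simp
    thus ?thesis using True unfolding F_def[symmetric] by simp
  next
    case False
    have "Max (s ` F) \<in> s ` F" using finF False by (intro Max_in) auto
    then obtain i0 where i0': "Max (s ` F) = s i0" "i0 \<in> F" by (rule imageE)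
    have i0: "i0 \<in> F" "s i0 = Max (s ` F)" using i0' by simp_all
    have le: "s i \<le> s i0" if "i \<in> F" for i
      unfolding i0(2) by (rule Max_ge) (simp_all add: finF that)
    have "F \<subseteq> {j\<in>G. s j \<le> s i0}"
    proof
      fix x assume "x \<in> F"
      then show "x \<in> {j\<in>G. s j \<le> s i0}" using le[of x] by (simp add: F_def)
    qed
    hence "card F \<le> card {j\<in>G. s j \<le> s i0}" by (intro card_mono) (simp_all add: fin)
    hence c1: "real (card F) \<le> real (card {j\<in>G. s j \<le> s i0})" by simp
    have c2: "real (card {j\<in>G. s j \<le> s i0}) < \<alpha> * real (card G)" using i0(1) by (simp add: F_def)
    have "real (card F) \<le> \<alpha> * real (card G)" using c1 c2 by (rule order_trans[OF _ less_imp_le])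
    thus ?thesis unfolding F_def .
  qed
qed

lemma sum_if_card: "finite A \<Longrightarrow> (\<Sum>i\<in>A. if Q i then 1 else 0) = real (card {i\<in>A. Q i})"
  using sum.inter_filter[of A "\<lambda>_. 1::real" Q] by simp

lemma total_count:
  fixes s :: "'i \<Rightarrow> real" and c :: "'i \<Rightarrow> 'k" assumes fin: "finite I" and a: "0 < \<alpha>"
  shows "(\<Sum>i\<in>I. if real (card {j\<in>I. c j = c i \<and> s j \<le> s i}) < \<alpha> * real (card {j\<in>I. c j = c i}) then 1 else 0)
          \<le> \<alpha> * real (card I)"
proof -
  let ?f = "\<lambda>i. if real (card {j\<in>I. c j = c i \<and> s j \<le> s i}) < \<alpha> * real (card {j\<in>I. c j = c i}) then 1 else (0::real)"
  have "(\<Sum>i\<in>I. ?f i) = (\<Sum>k\<in>c`I. \<Sum>i\<in>{i. i\<in>I \<and> c i = k}. ?f i)"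
    by (rule sum.image_gen[OF fin])
  also have "\<dots> \<le> (\<Sum>k\<in>c`I. \<alpha> * real (card {i. i\<in>I \<and> c i = k}))"
  proof (rule sum_mono)
    fix k assume k: "k \<in> c`I"
    let ?G = "{i. i\<in>I \<and> c i = k}"
    have finG: "finite ?G" using fin by simp
    have "(\<Sum>i\<in>?G. ?f i) = (\<Sum>i\<in>?G. if real (card {j\<in>?G. s j \<le> s i}) < \<alpha> * real (card ?G) then 1 else 0)"
    proof (rule sum.cong)
      fix i assume i: "i \<in> ?G"
      have e1: "{j\<in>I. c j = c i \<and> s j \<le> s i} = {j\<in>?G. s j \<le> s i}" using i by auto
      have e2: "{j\<in>I. c j = c i} = ?G" using i by auto
      show "?f i = (if real (card {j\<in>?G. s j \<le> s i}) < \<alpha> * real (card ?G) then 1 else 0)"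
        by (simp only: e1 e2)
    qed simp
    also have "\<dots> = real (card {i\<in>?G. real (card {j\<in>?G. s j \<le> s i}) < \<alpha> * real (card ?G)})"
      by (rule sum_if_card[OF finG])
    also have "\<dots> \<le> \<alpha> * real (card ?G)" by (rule group_count[OF finG a])
    finally show "(\<Sum>i\<in>?G. ?f i) \<le> \<alpha> * real (card ?G)" .
  qed
  also have "\<dots> = \<alpha> * (\<Sum>k\<in>c`I. real (card {i. i\<in>I \<and> c i = k}))"
    by (simp add: sum_distrib_left)
  also have "(\<Sum>k\<in>c`I. real (card {i. i\<in>I \<and> c i = k})) = real (card I)"
  proof -
    have "real (card I) = (\<Sum>i\<in>I. (1::real))" by simp
    also have "\<dots> = (\<Sum>k\<in>c`I. \<Sum>i\<in>{i. i\<in>I \<and> c i = k}. (1::real))"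
      by (rule sum.image_gen[OF fin])
    finally show ?thesis by simp
  qed
  finally show ?thesis .
qed

lemma Inf_char:
  fixes S :: "'b set" and sc :: "'b \<Rightarrow> real" and v :: real
  assumes fin: "finite S"
  shows "Inf {ereal t | t. (real (card {b\<in>S. sc b \<le> t}) + 1) / (real (card S) + 1) \<ge> \<alpha>} \<le> ereal v
     \<longleftrightarrow> \<alpha> \<le> (real (card {b\<in>S. sc b \<le> v}) + 1) / (real (card S) + 1)"
  (is "Inf {ereal t | t. ?H t \<ge> \<alpha>} \<le> _ \<longleftrightarrow> _")
proof
  assume "\<alpha> \<le> ?H v"
  thus "Inf {ereal t | t. ?H t \<ge> \<alpha>} \<le> ereal v" by (intro Inf_lower) auto
next
  assume inf: "Inf {ereal t | t. ?H t \<ge> \<alpha>} \<le> ereal v"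
  show "\<alpha> \<le> ?H v"
  proof (rule ccontr)
    assume nv: "\<not> \<alpha> \<le> ?H v"
    define T where "T = sc ` {b\<in>S. sc b > v}"
    define m where "m = Min (insert (v+1) T)"
    have finT: "finite T" using fin unfolding T_def by simp
    have mv: "v < m" unfolding m_def using finT by (auto simp: T_def)
    have bound: "m \<le> t" if t: "\<alpha> \<le> ?H t" for t
    proof (rule ccontr)
      assume "\<not> m \<le> t"
      hence tm: "t < m" by simp
      have sub: "{b\<in>S. sc b \<le> t} \<subseteq> {b\<in>S. sc b \<le> v}"
      proof
        fix b assume b: "b \<in> {b\<in>S. sc b \<le> t}"
        show "b \<in> {b\<in>S. sc b \<le> v}"
        proof (rule ccontr)
          assume "b \<notin> {b\<in>S. sc b \<le> v}"
          hence "sc b \<in> T" using b by (auto simp: T_def)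
          hence "m \<le> sc b" unfolding m_def using finT by simp
          thus False using b tm by simp
        qed
      qed
      have "card {b\<in>S. sc b \<le> t} \<le> card {b\<in>S. sc b \<le> v}" using sub fin by (intro card_mono) auto
      hence "?H t \<le> ?H v" by (intro divide_right_mono) auto
      thus False using t nv by simp
    qed
    have "ereal m \<le> Inf {ereal t | t. ?H t \<ge> \<alpha>}" by (rule Inf_greatest) (use bound in auto)
    hence "ereal m \<le> ereal v" using inf by (rule order_trans)
    with mv show False by simp
  qed
qed


definition failp :: "'a set set \<Rightarrow> ('x \<Rightarrow> 'a \<Rightarrow> real) \<Rightarrow> real \<Rightarrow> nat set \<Rightarrow> (nat \<Rightarrow> 'a \<times> 'x) \<Rightarrow> nat \<Rightarrow> bool" where
  "failp P \<tau> \<alpha> I \<omega> i \<longleftrightarrow>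
     real (card {j\<in>I. fst (\<omega> j) \<in> cell P (fst (\<omega> i)) \<and> \<tau> (snd (\<omega> j)) (fst (\<omega> j)) \<le> \<tau> (snd (\<omega> i)) (fst (\<omega> i))})
       < \<alpha> * real (card {j\<in>I. fst (\<omega> j) \<in> cell P (fst (\<omega> i))})"

lemma J_facts:
  assumes r_prob: "prob_space r" and K: "K \<in> r \<rightarrow>\<^sub>M prob_algebra X"
  shows "prob_space (joint_law r X K)" "sets (joint_law r X K) = sets (r \<Otimes>\<^sub>M X)"
proof -
  have kern: "(\<lambda>th. distr (K th) (r \<Otimes>\<^sub>M X) (\<lambda>x. (th, x))) \<in> r \<rightarrow>\<^sub>M prob_algebra (r \<Otimes>\<^sub>M X)"
    by (rule measurable_distr_prob_space2[OF K]) simp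
  have rin: "r \<in> space (prob_algebra r)" using r_prob by (simp add: space_prob_algebra)
  show "prob_space (joint_law r X K)" unfolding joint_law_def by (rule prob_space_bind'[OF rin kern])
  show "sets (joint_law r X K) = sets (r \<Otimes>\<^sub>M X)" unfolding joint_law_def by (rule sets_bind'[OF rin kern])
qed

lemma key_equiv:
  assumes part: "countable_partition r P" and th: "th \<in> space r"
  shows "(ereal (\<tau> x th) \<ge> C_hat P \<tau> \<alpha> B D th) \<longleftrightarrow> \<not> failp P \<tau> \<alpha> (insert B {..<B}) (D(B := (th, x))) B"
proof -
  define A where "A = cell P th"
  have thA: "th \<in> A" using cell_props[OF part th] unfolding A_def by simp
  define S where "S = idx_set P B D th"
  define c where "c = card {b\<in>S. \<tau> (snd (D b)) (fst (D b)) \<le> \<tau> x th}"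
  have finS: "finite S" unfolding S_def idx_set_def by simp
  have BS: "B \<notin> S" unfolding S_def idx_set_def by simp
  have e1: "{j\<in>insert B {..<B}. fst ((D(B := (th, x))) j) \<in> A \<and> \<tau> (snd ((D(B := (th, x))) j)) (fst ((D(B := (th, x))) j)) \<le> \<tau> x th}
      = insert B {b\<in>S. \<tau> (snd (D b)) (fst (D b)) \<le> \<tau> x th}"
    using thA unfolding S_def idx_set_def A_def[symmetric] by auto
  have e2: "{j\<in>insert B {..<B}. fst ((D(B := (th, x))) j) \<in> A} = insert B S"
    using thA unfolding S_def idx_set_def A_def[symmetric] by auto
  have c1: "card (insert B {b\<in>S. \<tau> (snd (D b)) (fst (D b)) \<le> \<tau> x th}) = Suc c"
    unfolding c_def using finS BS by simp
  have c2: "card (insert B S) = Suc (card S)" using finS BS by simp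
  have "failp P \<tau> \<alpha> (insert B {..<B}) (D(B := (th, x))) B \<longleftrightarrow> real (Suc c) < \<alpha> * real (Suc (card S))"
    unfolding failp_def using e1 e2 c1 c2 by (simp add: A_def)
  moreover have "(ereal (\<tau> x th) \<ge> C_hat P \<tau> \<alpha> B D th) \<longleftrightarrow> \<alpha> \<le> (real c + 1) / (real (card S) + 1)"
    unfolding C_hat_def H_hat_def S_def[symmetric] c_def using Inf_char[OF finS] by simp
  moreover have "\<alpha> \<le> (real c + 1) / (real (card S) + 1) \<longleftrightarrow> \<not> real (Suc c) < \<alpha> * real (Suc (card S))"
    by (simp add: pos_le_divide_eq add.commute not_less)
  ultimately show ?thesis by simp
qed


lemma card_perm:
  assumes inv: "\<And>j. j \<in> I \<Longrightarrow> \<pi> j \<in> I \<and> \<pi> (\<pi> j) = j"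
  shows "card {j\<in>I. R (\<pi> j)} = card {j\<in>I. R j}"
proof -
  have eq: "{j\<in>I. R (\<pi> j)} = \<pi> ` {j\<in>I. R j}"
  proof
    show "{j\<in>I. R (\<pi> j)} \<subseteq> \<pi> ` {j\<in>I. R j}"
    proof
      fix j assume j: "j \<in> {j\<in>I. R (\<pi> j)}"
      hence "\<pi> j \<in> {j\<in>I. R j}" using inv by simp
      moreover have "j = \<pi> (\<pi> j)" using inv j by simp
      ultimately show "j \<in> \<pi> ` {j\<in>I. R j}" by (rule rev_image_eqI)
    qed
    show "\<pi> ` {j\<in>I. R j} \<subseteq> {j\<in>I. R (\<pi> j)}" using inv by auto
  qed
  have "inj_on \<pi> {j\<in>I. R j}"
    by (rule inj_on_inverseI[where g=\<pi>]) (use inv in simp)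
  thus ?thesis unfolding eq by (rule card_image)
qed

theorem corollary1:
  fixes r :: "'a measure" and X :: "'x measure" and K :: "'a \<Rightarrow> 'x measure"
    and \<tau> :: "'x \<Rightarrow> 'a \<Rightarrow> real" and \<alpha> :: real and B :: nat and P :: "'a set set"
  assumes r_prob: "prob_space r"
    and K_kernel: "K \<in> r \<rightarrow>\<^sub>M prob_algebra X"
    and \<alpha>: "0 < \<alpha>" "\<alpha> < 1"
    and \<tau>_meas: "(\<lambda>(x, th). \<tau> x th) \<in> borel_measurable (X \<Otimes>\<^sub>M r)"
    and no_atoms: "\<And>th t. th \<in> space r \<Longrightarrow> emeasure (distr (K th) borel (\<lambda>x. \<tau> x th)) {t} = 0"
    and part: "countable_partition r P"
  shows "measure (PiM {..<B} (\<lambda>_. joint_law r X K) \<Otimes>\<^sub>M joint_law r X K)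
           {(D, (th, x)) \<in> space (PiM {..<B} (\<lambda>_. joint_law r X K) \<Otimes>\<^sub>M joint_law r X K).
              th \<in> R_hat r P \<tau> \<alpha> B D x} \<ge> 1 - \<alpha>"
proof -
  define J where "J = joint_law r X K"
  interpret Jp: prob_space J unfolding J_def by (rule J_facts(1)[OF r_prob K_kernel])
  have setsJ: "sets J = sets (r \<Otimes>\<^sub>M X)" unfolding J_def by (rule J_facts(2)[OF r_prob K_kernel])
  have spaceJ: "space J = space r \<times> space X"
    using sets_eq_imp_space_eq[OF setsJ] by (simp add: space_pair_measure)
  define I where "I = insert B {..<B}"
  have finI: "finite I" unfolding I_def by simp
  have BI: "B \<in> I" unfolding I_def by simp
  define Q where "Q = PiM I (\<lambda>_. J)"
  interpret Qp: prob_space Q unfolding Q_def by (rule prob_space_PiM) (rule Jp.prob_space_axioms)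
  define S where "S = PiM {..<B} (\<lambda>_. J) \<Otimes>\<^sub>M J"
  define g :: "(nat \<Rightarrow> 'a \<times> 'x) \<times> ('a \<times> 'x) \<Rightarrow> (nat \<Rightarrow> 'a \<times> 'x)" where "g = (\<lambda>(D, z). D(B := z))"
  have g_meas: "g \<in> S \<rightarrow>\<^sub>M Q" unfolding g_def S_def Q_def I_def by (rule measurable_add_dim)
  interpret Pp: prob_space "PiM {..<B} (\<lambda>_. J)" by (rule prob_space_PiM) (rule Jp.prob_space_axioms)
  interpret PS: pair_prob_space "PiM {..<B} (\<lambda>_. J)" J ..
  have g_distr: "distr S Q g = Q"
  proof -
    have Seq: "S = distr (J \<Otimes>\<^sub>M PiM {..<B} (\<lambda>_. J)) S (\<lambda>(x,y). (y,x))"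
      unfolding S_def by (rule PS.distr_pair_swap)
    have "distr S Q g = distr (distr (J \<Otimes>\<^sub>M PiM {..<B} (\<lambda>_. J)) S (\<lambda>(x,y). (y,x))) Q g"
      using Seq by (rule arg_cong[where f="\<lambda>M. distr M Q g"])
    also have "\<dots> = distr (J \<Otimes>\<^sub>M PiM {..<B} (\<lambda>_. J)) Q (g \<circ> (\<lambda>(x,y). (y,x)))"
      by (rule distr_distr[OF g_meas]) (unfold S_def, rule measurable_pair_swap')
    also have "g \<circ> (\<lambda>(x,y). (y,x)) = (\<lambda>(x, X). X(B := x))" by (auto simp: g_def fun_eq_iff)
    also have "distr (J \<Otimes>\<^sub>M PiM {..<B} (\<lambda>_. J)) Q (\<lambda>(x, X). X(B := x)) = Q"
      unfolding Q_def I_def by (rule distr_pair_PiM_eq_PiM) (rule Jp.prob_space_axioms)+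
    finally show ?thesis .
  qed
  define F where "F = {\<omega>\<in>space Q. failp P \<tau> \<alpha> I \<omega> B}"
  have comp_meas: "(\<lambda>\<omega>. \<omega> j) \<in> Q \<rightarrow>\<^sub>M r \<Otimes>\<^sub>M X" if "j \<in> I" for j
    using measurable_component_singleton[OF that, of "\<lambda>_. J"] setsJ
    unfolding Q_def by (simp cong: measurable_cong_sets)
  have fst_meas: "(\<lambda>\<omega>. fst (\<omega> j)) \<in> Q \<rightarrow>\<^sub>M r" if "j \<in> I" for j
    using measurable_compose[OF comp_meas[OF that] measurable_fst] by simp
  have sc_meas: "(\<lambda>\<omega>. \<tau> (snd (\<omega> j)) (fst (\<omega> j))) \<in> borel_measurable Q" if "j \<in> I" for j
  proof -
    have "(\<lambda>\<omega>. (snd (\<omega> j), fst (\<omega> j))) \<in> Q \<rightarrow>\<^sub>M X \<Otimes>\<^sub>M r"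
      using measurable_compose[OF comp_meas[OF that] measurable_snd]
        measurable_compose[OF comp_meas[OF that] measurable_fst]
      by (intro measurable_Pair) simp_all
    from measurable_compose[OF this \<tau>_meas] show ?thesis by simp
  qed
  have inspace: "fst (\<omega> j) \<in> space r" if "\<omega> \<in> space Q" "j \<in> I" for \<omega> j
    using measurable_space[OF fst_meas[OF that(2)] that(1)] .
  have fail_sets: "{\<omega>\<in>space Q. failp P \<tau> \<alpha> I \<omega> i} \<in> sets Q" if iI: "i \<in> I" for i
  proof -
    define SA where "SA = (\<lambda>A. {\<omega>\<in>space Q. fst (\<omega> i) \<in> A \<and>
        real (card {j\<in>I. fst (\<omega> j) \<in> A \<and> \<tau> (snd (\<omega> j)) (fst (\<omega> j)) \<le> \<tau> (snd (\<omega> i)) (fst (\<omega> i))})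
         < \<alpha> * real (card {j\<in>I. fst (\<omega> j) \<in> A})})"
    have eq: "{\<omega>\<in>space Q. failp P \<tau> \<alpha> I \<omega> i} = (\<Union>A\<in>P. SA A)"
    proof (rule set_eqI)
      fix \<omega>
      show "\<omega> \<in> {\<omega>\<in>space Q. failp P \<tau> \<alpha> I \<omega> i} \<longleftrightarrow> \<omega> \<in> (\<Union>A\<in>P. SA A)"
      proof (cases "\<omega> \<in> space Q")
        case False thus ?thesis unfolding SA_def by auto
      next
        case True
        have c: "cell P (fst (\<omega> i)) \<in> P \<and> fst (\<omega> i) \<in> cell P (fst (\<omega> i))"
          by (rule cell_props[OF part inspace[OF True iI]])
        have ce: "\<And>A. A \<in> P \<Longrightarrow> fst (\<omega> i) \<in> A \<Longrightarrow> cell P (fst (\<omega> i)) = A"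
          by (rule cell_eq[OF part])
        show ?thesis
        proof
          assume "\<omega> \<in> {\<omega>\<in>space Q. failp P \<tau> \<alpha> I \<omega> i}"
          hence "\<omega> \<in> SA (cell P (fst (\<omega> i)))" using True c unfolding SA_def failp_def by simp
          thus "\<omega> \<in> (\<Union>A\<in>P. SA A)" using c by blast
        next
          assume "\<omega> \<in> (\<Union>A\<in>P. SA A)"
          then obtain A where A: "A \<in> P" "\<omega> \<in> SA A" by blast
          hence "fst (\<omega> i) \<in> A" unfolding SA_def by simp
          hence "cell P (fst (\<omega> i)) = A" using ce A(1) by simp
          thus "\<omega> \<in> {\<omega>\<in>space Q. failp P \<tau> \<alpha> I \<omega> i}" using A(2) True unfolding SA_def failp_def by simp
        qed
      qed
    qed
    have cP: "countable P" using part unfolding countable_partition_def by simp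
    have "(\<Union>A\<in>P. SA A) \<in> sets Q"
    proof (rule sets.countable_UN''[OF cP])
      fix A assume A: "A \<in> P"
      hence Ar: "A \<in> sets r" using part unfolding countable_partition_def by auto
      have p1: "Measurable.pred Q (\<lambda>\<omega>. fst (\<omega> j) \<in> A)" if "j \<in> I" for j
        by (rule pred_sets2[OF Ar fst_meas[OF that]])
      have b1: "(\<lambda>\<omega>. if fst (\<omega> j) \<in> A \<and> \<tau> (snd (\<omega> j)) (fst (\<omega> j)) \<le> \<tau> (snd (\<omega> i)) (fst (\<omega> i)) then 1 else 0 :: real)
          \<in> borel_measurable Q" if "j \<in> I" for j
      proof -
        have p2: "Measurable.pred Q (\<lambda>\<omega>. \<tau> (snd (\<omega> j)) (fst (\<omega> j)) \<le> \<tau> (snd (\<omega> i)) (fst (\<omega> i)))"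
          unfolding pred_def by (rule borel_measurable_le[OF sc_meas[OF that] sc_meas[OF iI]])
        note [measurable] = p1[OF that] p2
        show ?thesis by measurable
      qed
      have b2: "(\<lambda>\<omega>. if fst (\<omega> j) \<in> A then 1 else 0 :: real) \<in> borel_measurable Q" if "j \<in> I" for j
      proof -
        note [measurable] = p1[OF that]
        show ?thesis by measurable
      qed
      have s1: "(\<lambda>\<omega>. \<Sum>j\<in>I. if fst (\<omega> j) \<in> A \<and> \<tau> (snd (\<omega> j)) (fst (\<omega> j)) \<le> \<tau> (snd (\<omega> i)) (fst (\<omega> i)) then 1 else 0 :: real)
          \<in> borel_measurable Q" by (rule borel_measurable_sum) (rule b1)
      have s2: "(\<lambda>\<omega>. \<Sum>j\<in>I. if fst (\<omega> j) \<in> A then 1 else 0 :: real) \<in> borel_measurable Q"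
        by (rule borel_measurable_sum) (rule b2)
      have SAeq: "SA A = {\<omega>\<in>space Q. fst (\<omega> i) \<in> A \<and>
          (\<Sum>j\<in>I. if fst (\<omega> j) \<in> A \<and> \<tau> (snd (\<omega> j)) (fst (\<omega> j)) \<le> \<tau> (snd (\<omega> i)) (fst (\<omega> i)) then 1 else 0 :: real)
          < \<alpha> * (\<Sum>j\<in>I. if fst (\<omega> j) \<in> A then 1 else 0 :: real)}"
        unfolding SA_def by (simp only: sum_if_card[OF finI])
      show "SA A \<in> sets Q" unfolding SAeq
      proof -
        note [measurable] = s1 s2 p1[OF iI]
        show "{\<omega>\<in>space Q. fst (\<omega> i) \<in> A \<and>
          (\<Sum>j\<in>I. if fst (\<omega> j) \<in> A \<and> \<tau> (snd (\<omega> j)) (fst (\<omega> j)) \<le> \<tau> (snd (\<omega> i)) (fst (\<omega> i)) then 1 else 0 :: real)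
          < \<alpha> * (\<Sum>j\<in>I. if fst (\<omega> j) \<in> A then 1 else 0 :: real)} \<in> sets Q" by measurable
      qed
    qed
    thus ?thesis unfolding eq .
  qed
  have Fsets0: "F \<in> sets Q" unfolding F_def by (rule fail_sets[OF BI])
  have sym: "measure Q {\<omega>\<in>space Q. failp P \<tau> \<alpha> I \<omega> i} = measure Q F" if iI: "i \<in> I" for i
  proof -
    define \<pi> where "\<pi> = (\<lambda>j::nat. if j = i then B else if j = B then i else j)"
    have inv: "\<pi> j \<in> I \<and> \<pi> (\<pi> j) = j" if "j \<in> I" for j
      using that iI BI unfolding \<pi>_def by auto
    have injp: "inj_on \<pi> I" by (rule inj_on_inverseI[where g=\<pi>]) (use inv in simp)
    have pI: "\<pi> \<in> I \<rightarrow> I" using inv by simp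
    define h where "h = (\<lambda>\<omega>::nat \<Rightarrow> 'a \<times> 'x. \<lambda>n\<in>I. \<omega> (\<pi> n))"
    have h_distr: "distr Q Q h = Q"
      using distr_PiM_reindex[of I "\<lambda>_. J" \<pi> I] injp pI Jp.prob_space_axioms
      unfolding Q_def h_def by simp
    have h_meas: "h \<in> Q \<rightarrow>\<^sub>M Q" unfolding h_def Q_def
      by (rule measurable_restrict) (rule measurable_component_singleton, use inv in simp)
    have hpre: "h -` F \<inter> space Q = {\<omega>\<in>space Q. failp P \<tau> \<alpha> I \<omega> i}"
    proof (rule set_eqI)
      fix \<omega>
      show "\<omega> \<in> h -` F \<inter> space Q \<longleftrightarrow> \<omega> \<in> {\<omega>\<in>space Q. failp P \<tau> \<alpha> I \<omega> i}"
      proof (cases "\<omega> \<in> space Q")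
        case False thus ?thesis by simp
      next
        case True
        have hs: "h \<omega> \<in> space Q" using measurable_space[OF h_meas True] .
        have hj: "h \<omega> j = \<omega> (\<pi> j)" if "j \<in> I" for j using that unfolding h_def by simp
        have hB: "h \<omega> B = \<omega> i" using hj[OF BI] unfolding \<pi>_def by simp
        have e1: "{j\<in>I. fst (h \<omega> j) \<in> cell P (fst (h \<omega> B)) \<and> \<tau> (snd (h \<omega> j)) (fst (h \<omega> j)) \<le> \<tau> (snd (h \<omega> B)) (fst (h \<omega> B))}
            = {j\<in>I. fst (\<omega> (\<pi> j)) \<in> cell P (fst (\<omega> i)) \<and> \<tau> (snd (\<omega> (\<pi> j))) (fst (\<omega> (\<pi> j))) \<le> \<tau> (snd (\<omega> i)) (fst (\<omega> i))}"
          using hj hB by auto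
        have e2: "{j\<in>I. fst (h \<omega> j) \<in> cell P (fst (h \<omega> B))}
            = {j\<in>I. fst (\<omega> (\<pi> j)) \<in> cell P (fst (\<omega> i))}"
          using hj hB by auto
        have c1: "card {j\<in>I. fst (\<omega> (\<pi> j)) \<in> cell P (fst (\<omega> i)) \<and> \<tau> (snd (\<omega> (\<pi> j))) (fst (\<omega> (\<pi> j))) \<le> \<tau> (snd (\<omega> i)) (fst (\<omega> i))}
           = card {j\<in>I. fst (\<omega> j) \<in> cell P (fst (\<omega> i)) \<and> \<tau> (snd (\<omega> j)) (fst (\<omega> j)) \<le> \<tau> (snd (\<omega> i)) (fst (\<omega> i))}"
          by (rule card_perm[where R="\<lambda>k. fst (\<omega> k) \<in> cell P (fst (\<omega> i)) \<and> \<tau> (snd (\<omega> k)) (fst (\<omega> k)) \<le> \<tau> (snd (\<omega> i)) (fst (\<omega> i))", OF inv])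
        have c2: "card {j\<in>I. fst (\<omega> (\<pi> j)) \<in> cell P (fst (\<omega> i))} = card {j\<in>I. fst (\<omega> j) \<in> cell P (fst (\<omega> i))}"
          by (rule card_perm[where R="\<lambda>k. fst (\<omega> k) \<in> cell P (fst (\<omega> i))", OF inv])
        have "failp P \<tau> \<alpha> I (h \<omega>) B \<longleftrightarrow> failp P \<tau> \<alpha> I \<omega> i"
          unfolding failp_def e1 e2 c1 c2 ..
        thus ?thesis using True hs unfolding F_def by simp
      qed
    qed
    have "measure Q F = measure (distr Q Q h) F" using h_distr by simp
    also have "\<dots> = measure Q (h -` F \<inter> space Q)" by (rule measure_distr[OF h_meas Fsets0])
    finally show ?thesis unfolding hpre by simp
  qed
  have sumbound: "(\<Sum>i\<in>I. measure Q {\<omega>\<in>space Q. failp P \<tau> \<alpha> I \<omega> i}) \<le> \<alpha> * real (card I)"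
  proof -
    define Ai where "Ai = (\<lambda>i. {\<omega>\<in>space Q. failp P \<tau> \<alpha> I \<omega> i})"
    have Ais: "Ai i \<in> sets Q" if "i \<in> I" for i unfolding Ai_def by (rule fail_sets[OF that])
    have intg: "integrable Q (indicator (Ai i) :: _ \<Rightarrow> real)" if "i \<in> I" for i
      using Ais[OF that] by (intro integrable_real_indicator) (simp_all add: Qp.emeasure_finite less_top[symmetric])
    have "(\<Sum>i\<in>I. measure Q (Ai i)) = (\<Sum>i\<in>I. integral\<^sup>L Q (indicator (Ai i) :: _ \<Rightarrow> real))"
    proof (rule sum.cong)
      fix i assume "i \<in> I"
      have "Ai i \<inter> space Q = Ai i" unfolding Ai_def by auto
      thus "measure Q (Ai i) = integral\<^sup>L Q (indicator (Ai i) :: _ \<Rightarrow> real)" by simp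
    qed simp
    also have "\<dots> = integral\<^sup>L Q (\<lambda>\<omega>. \<Sum>i\<in>I. indicator (Ai i) \<omega> :: real)"
    proof -
      have X: "integral\<^sup>L Q (\<lambda>\<omega>. \<Sum>i\<in>I. indicator (Ai i) \<omega> :: real) = (\<Sum>i\<in>I. integral\<^sup>L Q (indicator (Ai i) :: _ \<Rightarrow> real))"
        by (rule Bochner_Integration.integral_sum) (rule intg)
      show ?thesis by (rule X[symmetric])
    qed
    also have "\<dots> \<le> integral\<^sup>L Q (\<lambda>\<omega>. \<alpha> * real (card I))"
    proof (rule integral_mono)
      show "integrable Q (\<lambda>\<omega>. \<Sum>i\<in>I. indicator (Ai i) \<omega> :: real)"
        by (rule Bochner_Integration.integrable_sum) (rule intg)
      show "integrable Q (\<lambda>\<omega>. \<alpha> * real (card I))" by simp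
      fix \<omega> assume w: "\<omega> \<in> space Q"
      have "(\<Sum>i\<in>I. indicator (Ai i) \<omega> :: real) = (\<Sum>i\<in>I. if failp P \<tau> \<alpha> I \<omega> i then 1 else 0)"
        using w unfolding Ai_def by (intro sum.cong) (auto simp: indicator_def)
      also have "\<dots> = (\<Sum>i\<in>I. if real (card {j\<in>I. cell P (fst (\<omega> j)) = cell P (fst (\<omega> i)) \<and>
                 \<tau> (snd (\<omega> j)) (fst (\<omega> j)) \<le> \<tau> (snd (\<omega> i)) (fst (\<omega> i))})
            < \<alpha> * real (card {j\<in>I. cell P (fst (\<omega> j)) = cell P (fst (\<omega> i))}) then 1 else 0)"
      proof (rule sum.cong)
        fix i assume iI: "i \<in> I"
        have m: "fst (\<omega> j) \<in> cell P (fst (\<omega> i)) \<longleftrightarrow> cell P (fst (\<omega> j)) = cell P (fst (\<omega> i))" if "j \<in> I" for j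
          by (rule cell_mem_iff[OF part inspace[OF w iI] inspace[OF w that]])
        have e1: "{j\<in>I. fst (\<omega> j) \<in> cell P (fst (\<omega> i)) \<and> \<tau> (snd (\<omega> j)) (fst (\<omega> j)) \<le> \<tau> (snd (\<omega> i)) (fst (\<omega> i))}
           = {j\<in>I. cell P (fst (\<omega> j)) = cell P (fst (\<omega> i)) \<and> \<tau> (snd (\<omega> j)) (fst (\<omega> j)) \<le> \<tau> (snd (\<omega> i)) (fst (\<omega> i))}"
          using m by blast
        have e2: "{j\<in>I. fst (\<omega> j) \<in> cell P (fst (\<omega> i))} = {j\<in>I. cell P (fst (\<omega> j)) = cell P (fst (\<omega> i))}"
          using m by blast
        show "(if failp P \<tau> \<alpha> I \<omega> i then 1 else 0) = (if real (card {j\<in>I. cell P (fst (\<omega> j)) = cell P (fst (\<omega> i)) \<and>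
                 \<tau> (snd (\<omega> j)) (fst (\<omega> j)) \<le> \<tau> (snd (\<omega> i)) (fst (\<omega> i))})
            < \<alpha> * real (card {j\<in>I. cell P (fst (\<omega> j)) = cell P (fst (\<omega> i))}) then 1 else (0::real))"
          unfolding failp_def e1 e2 ..
      qed simp
      also have "\<dots> \<le> \<alpha> * real (card I)"
        by (rule total_count[OF finI \<alpha>(1)])
      finally show "(\<Sum>i\<in>I. indicator (Ai i) \<omega> :: real) \<le> \<alpha> * real (card I)" .
    qed
    also have "\<dots> = \<alpha> * real (card I)" by (simp add: Qp.prob_space)
    finally show ?thesis unfolding Ai_def .
  qed
  have FB: "measure Q F \<le> \<alpha>"
  proof -
    have "(\<Sum>i\<in>I. measure Q {\<omega>\<in>space Q. failp P \<tau> \<alpha> I \<omega> i}) = real (card I) * measure Q F"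
      using sym by simp
    with sumbound have "real (card I) * measure Q F \<le> real (card I) * \<alpha>" by (simp add: mult.commute)
    moreover have "0 < real (card I)" using finI BI by (simp add: card_gt_0_iff) blast
    ultimately show ?thesis by simp
  qed
  have Fsets: "F \<in> sets Q" unfolding F_def by (rule fail_sets[OF BI])
  have ev: "{(D, (th, x)) \<in> space S. th \<in> R_hat r P \<tau> \<alpha> B D x} = g -` (space Q - F) \<inter> space S"
  proof (rule set_eqI)
    fix p :: "(nat \<Rightarrow> 'a \<times> 'x) \<times> ('a \<times> 'x)"
    obtain D th x where p: "p = (D, (th, x))" by (cases p) auto
    show "p \<in> {(D, (th, x)) \<in> space S. th \<in> R_hat r P \<tau> \<alpha> B D x} \<longleftrightarrow> p \<in> g -` (space Q - F) \<inter> space S"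
    proof (cases "p \<in> space S")
      case False thus ?thesis by auto
    next
      case True
      have th: "th \<in> space r" using True unfolding p S_def by (simp add: space_pair_measure spaceJ)
      have gs: "g p \<in> space Q" using measurable_space[OF g_meas True] .
      have gp: "g p = D(B := (th, x))" unfolding p g_def by simp
      have "p \<in> {(D, (th, x)) \<in> space S. th \<in> R_hat r P \<tau> \<alpha> B D x} \<longleftrightarrow> ereal (\<tau> x th) \<ge> C_hat P \<tau> \<alpha> B D th"
        using True th unfolding p R_hat_def by simp
      also have "\<dots> \<longleftrightarrow> \<not> failp P \<tau> \<alpha> I (D(B := (th, x))) B"
        unfolding I_def by (rule key_equiv[OF part th])
      also have "\<dots> \<longleftrightarrow> p \<in> g -` (space Q - F) \<inter> space S"
        using True gs unfolding F_def gp[symmetric] by auto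
      finally show ?thesis .
    qed
  qed
  have "measure S {(D, (th, x)) \<in> space S. th \<in> R_hat r P \<tau> \<alpha> B D x} = measure Q (space Q - F)"
    unfolding ev using measure_distr[OF g_meas, of "space Q - F"] Fsets g_distr by simp
  also have "\<dots> = 1 - measure Q F" using Qp.prob_compl[OF Fsets] .
  finally have "measure S {(D, (th, x)) \<in> space S. th \<in> R_hat r P \<tau> \<alpha> B D x} \<ge> 1 - \<alpha>" using FB by simp
  thus ?thesis unfolding S_def J_def .
qed

end
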